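(* Let $D\geq 5$ and $n\geq 1$ be integers. Let $\mathcal{Z}_{(1)},\mathcal{Z}_{(2)},\mathcal{Z}_{(3)},\mathcal{Z}_{(n+2)},\mathcal{Z}_{(n+3)},\mathcal{Z}_{(n+4)}$ be scalar curvature invariants (built from the metric and the Riemann tensor) such that for each order $m\in\{1,2,3,n+2,n+3,n+4\}$ and every function $f(r)$ $$\mathcal{Z}_{(m)}|_f = r^{2-D}\frac{\mathrm{d}}{\mathrm{d}r}\Big[r^{D-1}\psi^{m-1}\big((2m-D)\psi-2mB\big)\Big]=-4m(m-1)B^2\psi^{m-2}+m\big(2A-4(D-2m)B\big)\psi^{m-1}-(D-2m)(D-2m-1)\psi^m.$$ Define $$\mathcal{Z}_{(n+5)}=-\frac{3(n+3)\mathcal{Z}_{(1)}\mathcal{Z}_{(n+4)}}{D(D-1)(n+1)}+\frac{3(n+4)\mathcal{Z}_{(2)}\mathcal{Z}_{(n+3)}}{D(D-1)n}-\frac{(n+3)(n+4)\mathcal{Z}_{(3)}\mathcal{Z}_{(n+2)}}{D(D-1)n(n+1)}.$$ Then for every $f(r)$, $\mathcal{Z}_{(n+5)}|_f$ is given by the same formula with $m=n+5$.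
   Context: Consider the metric $\mathrm{d}s^2=-f(r)\mathrm{d}t^2+\mathrm{d}r^2/f(r)+r^2\mathrm{d}\Sigma^2_{k}$ in $D$ dimensions, where $\mathrm{d}\Sigma^2_k$ is the metric of a $(D-2)$-dimensional space of constant sectional curvature $k\in\{1,0,-1\}$. For a scalar curvature invariant $\mathcal{L}$, $\mathcal{L}|_f$ denotes its evaluation on this metric, a function of $r,f,f',f''$. Set $A=f''(r)/2$, $B=-f'(r)/(2r)$, $\psi=(k-f(r))/r^2$. *)

theory Defs
  imports "HOL-Analysis.Analysis"
begin

definition AQ :: "(real \<Rightarrow> real) \<Rightarrow> real \<Rightarrow> real" where
  "AQ f r = deriv (deriv f) r / 2"
definition BQ :: "(real \<Rightarrow> real) \<Rightarrow> real \<Rightarrow> real" where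
  "BQ f r = - deriv f r / (2 * r)"
definition psiQ :: "real \<Rightarrow> (real \<Rightarrow> real) \<Rightarrow> real \<Rightarrow> real" where
  "psiQ k f r = (k - f r) / r ^ 2"

definition QTZ :: "nat \<Rightarrow> real \<Rightarrow> nat \<Rightarrow> (real \<Rightarrow> real) \<Rightarrow> real \<Rightarrow> real" where
  "QTZ D k m f r =
     - 4 * real m * (real m - 1) * (BQ f r)^2 * (psiQ k f r) ^ (m - 2)
     + real m * (2 * AQ f r - 4 * (real D - 2 * real m) * BQ f r) * (psiQ k f r) ^ (m - 1)
     - (real D - 2 * real m) * (real D - 2 * real m - 1) * (psiQ k f r) ^ m"

end

theory Submission
  imports Defs
begin
lemma frac0:
  fixes U V W a x :: real
  assumes "x > 0" "a \<noteq> 0"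
  shows "U / (a * (x + 1)) + V / (a * x) - W / (a * x * (x + 1))
     = (x * U + (x + 1) * V - W) / (a * x * (x + 1))"
proof -
  have h: "x \<noteq> 0" "x + 1 \<noteq> 0" using assms by auto
  have 1: "x * U / (a * x * (x + 1)) = U / (a * (x + 1))"
    using h by (metis mult.assoc mult.left_commute mult_divide_mult_cancel_left_if)
  have 2: "(x + 1) * V / (a * x * (x + 1)) = V / (a * x)"
    using h by (metis mult.commute mult_divide_mult_cancel_left_if)
  have "(x * U + (x + 1) * V - W) / (a * x * (x + 1))
     = x * U / (a * x * (x + 1)) + (x + 1) * V / (a * x * (x + 1)) - W / (a * x * (x + 1))"
    by (simp add: add_divide_distrib diff_divide_distrib)
  then show ?thesis using 1 2 by simp
qed

lemma frac:
  fixes U V W d x :: real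
  assumes "x > 0" "d > 1"
  shows "U / (d * (d - 1) * (x + 1)) + V / (d * (d - 1) * x) - W / (d * (d - 1) * x * (x + 1))
     = (x * U + (x + 1) * V - W) / (d * (d - 1) * x * (x + 1))"
  using frac0[of x "d * (d - 1)" U V W] assms by simp

lemma key:
  fixes A B p q d x :: real
  assumes "x > 0" "d > 1"
  shows "- 3 * (x + 3) * ((2 * A - 4 * (d - 2) * B) - (d - 2) * (d - 3) * p)
        * (- 4 * (x+4) * (x+3) * B^2 * (q * p^2) + (x+4) * (2*A - 4*(d - 2*(x+4))*B) * (q*p^3)
           - (d - 2*(x+4)) * (d - 2*(x+4) - 1) * (q*p^4)) / (d * (d - 1) * (x + 1))
      + 3 * (x + 4) * (-8 * B^2 + 2 * (2*A - 4*(d-4)*B) * p - (d-4)*(d-5)*p^2)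
        * (- 4 * (x+3) * (x+2) * B^2 * (q * p) + (x+3) * (2*A - 4*(d - 2*(x+3))*B) * (q*p^2)
           - (d - 2*(x+3)) * (d - 2*(x+3) - 1) * (q*p^3)) / (d * (d - 1) * x)
      - (x + 3) * (x + 4) * (-24 * B^2 * p + 3 * (2*A - 4*(d-6)*B) * p^2 - (d-6)*(d-7)*p^3)
        * (- 4 * (x+2) * (x+1) * B^2 * q + (x+2) * (2*A - 4*(d - 2*(x+2))*B) * (q*p)
           - (d - 2*(x+2)) * (d - 2*(x+2) - 1) * (q*p^2)) / (d * (d - 1) * x * (x + 1))
      = - 4 * (x+5) * (x+4) * B^2 * (q * p^3) + (x+5) * (2*A - 4*(d - 2*(x+5))*B) * (q*p^4)
           - (d - 2*(x+5)) * (d - 2*(x+5) - 1) * (q*p^5)"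
  (is "?U / ?D1 + ?V / ?D2 - ?W / ?D3 = ?R")
proof -
  have h: "d * (d - 1) * x * (x + 1) \<noteq> 0" using assms by auto
  have "?U / ?D1 + ?V / ?D2 - ?W / ?D3 = (x * ?U + (x + 1) * ?V - ?W) / ?D3"
    by (rule frac[OF assms])
  also have "x * ?U + (x + 1) * ?V - ?W = ?R * ?D3"
    by algebra
  finally show ?thesis using h by simp
qed
theorem mainTheorem3:
  fixes D n :: nat and k :: real
    and Z :: "nat \<Rightarrow> (real \<Rightarrow> real) \<Rightarrow> real \<Rightarrow> real"
  assumes "D \<ge> 5" and "n \<ge> 1" and "k \<in> {1, 0, -1}"
    and "\<forall>m \<in> {1, 2, 3, n + 2, n + 3, n + 4}. \<forall>f r. r > 0 \<longrightarrow> Z m f r = QTZ D k m f r"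
  shows "\<forall>f r. r > 0 \<longrightarrow>
      - 3 * (real n + 3) * Z 1 f r * Z (n + 4) f r / (real D * (real D - 1) * (real n + 1))
      + 3 * (real n + 4) * Z 2 f r * Z (n + 3) f r / (real D * (real D - 1) * real n)
      - (real n + 3) * (real n + 4) * Z 3 f r * Z (n + 2) f r
          / (real D * (real D - 1) * real n * (real n + 1))
      = QTZ D k (n + 5) f r"
proof (intro allI impI)
  fix f :: "real \<Rightarrow> real" and r :: real
  assume r: "r > 0"
  define A where "A = AQ f r"
  define B where "B = BQ f r"
  define p where "p = psiQ k f r"
  define q where "q = p ^ n"
  define x where "x = real n"
  define d where "d = real D"
  have x0: "x > 0" using assms(2) unfolding x_def by simp
  have d1: "d > 1" using assms(1) unfolding d_def by simp
  have Zm: "\<And>m. m \<in> {1, 2, 3, n + 2, n + 3, n + 4} \<Longrightarrow> Z m f r = QTZ D k m f r"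
    using assms(4) r by blast
  have e1: "Z 1 f r = (2 * A - 4 * (d - 2) * B) - (d - 2) * (d - 3) * p"
    using Zm[of 1] unfolding QTZ_def A_def B_def p_def d_def by (simp add: algebra_simps)
  have e2: "Z 2 f r = -8 * B^2 + 2 * (2*A - 4*(d-4)*B) * p - (d-4)*(d-5)*p^2"
    using Zm[of 2] unfolding QTZ_def A_def B_def p_def d_def by (simp add: algebra_simps)
  have e3: "Z 3 f r = -24 * B^2 * p + 3 * (2*A - 4*(d-6)*B) * p^2 - (d-6)*(d-7)*p^3"
    using Zm[of 3] unfolding QTZ_def A_def B_def p_def d_def by (simp add: algebra_simps)
  have pw4: "p^(n+4-2) = q*p^2" "p^(n+4-1) = q*p^3" "p^(n+4) = q*p^4"
    by (simp_all add: q_def power_add power2_eq_square)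
  have rx4: "real (n+4) = x+4" by (simp add: x_def)
  have "Z (n+4) f r = - 4 * real (n+4) * (real (n+4) - 1) * B^2 * p^(n+4-2)
     + real (n+4) * (2*A - 4*(real D - 2*real (n+4))*B) * p^(n+4-1)
     - (real D - 2*real (n+4))*(real D - 2*real(n+4) - 1) * p^(n+4)"
    using Zm[of "n+4"] unfolding QTZ_def A_def B_def p_def by simp
  then have "Z (n+4) f r = - 4 * (x+4) * ((x+4) - 1) * B^2 * (q*p^2)
     + (x+4) * (2*A - 4*(d - 2*(x+4))*B) * (q*p^3)
     - (d - 2*(x+4))*(d - 2*(x+4) - 1) * (q*p^4)"
    unfolding pw4 rx4 d_def .
  then have e4: "Z (n+4) f r = - 4 * (x+4) * (x+3) * B^2 * (q * p^2) + (x+4) * (2*A - 4*(d - 2*(x+4))*B) * (q*p^3)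
           - (d - 2*(x+4)) * (d - 2*(x+4) - 1) * (q*p^4)"
    by algebra
  have pw3: "p^(n+3-2) = q*p^1" "p^(n+3-1) = q*p^2" "p^(n+3) = q*p^3"
    by (simp_all add: q_def power_add power2_eq_square)
  have rx3: "real (n+3) = x+3" by (simp add: x_def)
  have "Z (n+3) f r = - 4 * real (n+3) * (real (n+3) - 1) * B^2 * p^(n+3-2)
     + real (n+3) * (2*A - 4*(real D - 2*real (n+3))*B) * p^(n+3-1)
     - (real D - 2*real (n+3))*(real D - 2*real(n+3) - 1) * p^(n+3)"
    using Zm[of "n+3"] unfolding QTZ_def A_def B_def p_def by simp
  then have "Z (n+3) f r = - 4 * (x+3) * ((x+3) - 1) * B^2 * (q*p^1)
     + (x+3) * (2*A - 4*(d - 2*(x+3))*B) * (q*p^2)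
     - (d - 2*(x+3))*(d - 2*(x+3) - 1) * (q*p^3)"
    unfolding pw3 rx3 d_def .
  then have e5: "Z (n+3) f r = - 4 * (x+3) * (x+2) * B^2 * (q * p) + (x+3) * (2*A - 4*(d - 2*(x+3))*B) * (q*p^2)
           - (d - 2*(x+3)) * (d - 2*(x+3) - 1) * (q*p^3)"
    by algebra
  have pw2: "p^(n+2-2) = q*p^0" "p^(n+2-1) = q*p^1" "p^(n+2) = q*p^2"
    by (simp_all add: q_def power_add power2_eq_square)
  have rx2: "real (n+2) = x+2" by (simp add: x_def)
  have "Z (n+2) f r = - 4 * real (n+2) * (real (n+2) - 1) * B^2 * p^(n+2-2)
     + real (n+2) * (2*A - 4*(real D - 2*real (n+2))*B) * p^(n+2-1)
     - (real D - 2*real (n+2))*(real D - 2*real(n+2) - 1) * p^(n+2)"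
    using Zm[of "n+2"] unfolding QTZ_def A_def B_def p_def by simp
  then have "Z (n+2) f r = - 4 * (x+2) * ((x+2) - 1) * B^2 * (q*p^0)
     + (x+2) * (2*A - 4*(d - 2*(x+2))*B) * (q*p^1)
     - (d - 2*(x+2))*(d - 2*(x+2) - 1) * (q*p^2)"
    unfolding pw2 rx2 d_def .
  then have e6: "Z (n+2) f r = - 4 * (x+2) * (x+1) * B^2 * q + (x+2) * (2*A - 4*(d - 2*(x+2))*B) * (q*p)
           - (d - 2*(x+2)) * (d - 2*(x+2) - 1) * (q*p^2)"
    by algebra
  have e7: "QTZ D k (n + 5) f r = - 4 * (x+5) * (x+4) * B^2 * (q * p^3) + (x+5) * (2*A - 4*(d - 2*(x+5))*B) * (q*p^4)
           - (d - 2*(x+5)) * (d - 2*(x+5) - 1) * (q*p^5)"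
    unfolding QTZ_def A_def B_def p_def d_def q_def x_def
    by (simp add: power_add algebra_simps power2_eq_square power3_eq_cube)
  show "- 3 * (real n + 3) * Z 1 f r * Z (n + 4) f r / (real D * (real D - 1) * (real n + 1))
      + 3 * (real n + 4) * Z 2 f r * Z (n + 3) f r / (real D * (real D - 1) * real n)
      - (real n + 3) * (real n + 4) * Z 3 f r * Z (n + 2) f r
          / (real D * (real D - 1) * real n * (real n + 1))
      = QTZ D k (n + 5) f r"
    unfolding e1 e2 e3 e4 e5 e6 e7 x_def[symmetric] d_def[symmetric]
    using key[OF x0 d1, of A B p q] by (simp only: mult.assoc)
qed
end
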